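(* For every $n\ge 1$, \[ \mathrm{URL}_n=\{\mathrm{shape}(\Psi(\sigma)) : \sigma\in \mathrm{And}^{I}_n\}=\{\mathrm{shape}(\Psi(\sigma)) : \sigma\in \mathrm{And}^{II}_n\}=\{\mathrm{shape}(\Psi(\sigma)) : \sigma\in \mathrm{RS}_n\}. \]
   Context: A binary tree is a rooted tree in which every vertex has no child, a single left child, a single right child, or both. An increasing binary tree is a binary tree with distinct labels increasing along every path from the root. The map $\Psi$ sends a word $\pi$ of distinct integers to an increasing binary tree: $\Psi(\emptyset)=\emptyset$; otherwise write $\pi=\sigma\, i\,\tau$ with $i$ the least letter of $\pi$, and let $\Psi(\pi)$ have root $i$, left subtree $\Psi(\sigma)$ and right subtree $\Psi(\tau)$. $\mathrm{shape}(T)$ is the underlying unlabeled binary tree of $T$. $\mathrm{URL}_n$ is the set of unlabeled rooted binary trees with $n$ vertices in which no vertex has a left child but no right child. Andr\'e permutations: the empty word and one-letter words are Andr\'e I and Andr\'e II. A word $\sigma$ of $n\ge2$ distinct integers, written $\sigma=\tau\,\min(\sigma)\,\tau'$, is Andr\'e I (resp. II) if $\tau,\tau'$ are Andr\'e I (resp. II) and the largest (resp. smallest) letter of $\tau\tau'$ lies in $\tau'$. $\mathrm{And}^{I}_n$, $\mathrm{And}^{II}_n$ denote these permutations of $[n]$. A permutation $\sigma=\sigma_1\cdots\sigma_n$ of $[n]$ is simsun if $\sigma_n=n$ and for every $k\in[n]$ the subword of $\sigma$ formed by the letters $1,\dots,k$ has no index $i$ with $w_i>w_{i+1}>w_{i+2}$.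 $\mathrm{RS}_n$ is the set of simsun permutations of $[n]$. *)

theory Defs
  imports "HOL-Library.Tree"
begin

(* Decomposition w = sigma i tau with i = min w *)
definition lpart :: "'a::linorder list \<Rightarrow> 'a list" where
  "lpart w = takeWhile (\<lambda>x. x \<noteq> Min (set w)) w"
definition rpart :: "'a::linorder list \<Rightarrow> 'a list" where
  "rpart w = tl (dropWhile (\<lambda>x. x \<noteq> Min (set w)) w)"

lemma dw_ne: "w \<noteq> [] \<Longrightarrow> dropWhile (\<lambda>x. x \<noteq> Min (set w)) w \<noteq> []"
  by (simp add: dropWhile_eq_Nil_conv)

lemma lpart_len: "w \<noteq> [] \<Longrightarrow> length (lpart w) < length w"
proof -
  assume ne: "w \<noteq> []"
  have "length w = length (lpart w) + length (dropWhile (\<lambda>x. x \<noteq> Min (set w)) w)"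
    unfolding lpart_def by (metis length_append takeWhile_dropWhile_id)
  with dw_ne[OF ne] show ?thesis by simp
qed

lemma rpart_len: "w \<noteq> [] \<Longrightarrow> length (rpart w) < length w"
proof -
  assume ne: "w \<noteq> []"
  have "length (dropWhile (\<lambda>x. x \<noteq> Min (set w)) w) \<le> length w" by (rule length_dropWhile_le)
  moreover have "length (dropWhile (\<lambda>x. x \<noteq> Min (set w)) w) \<noteq> 0" using dw_ne[OF ne] by simp
  moreover have "length (rpart w) = length (dropWhile (\<lambda>x. x \<noteq> Min (set w)) w) - 1"
    unfolding rpart_def by (simp only: length_tl)
  ultimately show ?thesis by linarith
qed

function Psi :: "'a::linorder list \<Rightarrow> 'a tree" where
  "Psi w = (if w = [] then Leaf else Node (Psi (lpart w)) (Min (set w)) (Psi (rpart w)))"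
  by pat_completeness auto
termination
  by (relation "measure length") (auto simp: lpart_len rpart_len)

declare Psi.simps[simp del]

definition shape :: "'a tree \<Rightarrow> unit tree" where
  "shape t = map_tree (\<lambda>_. ()) t"

fun no_left_only :: "unit tree \<Rightarrow> bool" where
  "no_left_only Leaf = True"
| "no_left_only (Node l _ r) = (\<not> (l \<noteq> Leaf \<and> r = Leaf) \<and> no_left_only l \<and> no_left_only r)"

definition URL :: "nat \<Rightarrow> unit tree set" where
  "URL n = {t. size t = n \<and> no_left_only t}"

function andreI :: "'a::linorder list \<Rightarrow> bool" where
  "andreI w = (if length w \<le> 1 then True else
     (andreI (lpart w) \<and> andreI (rpart w) \<and> Max (set (lpart w @ rpart w)) \<in> set (rpart w)))"
  by pat_completeness auto
termination
  by (relation "measure length") (auto intro!: lpart_len rpart_len)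

function andreII :: "'a::linorder list \<Rightarrow> bool" where
  "andreII w = (if length w \<le> 1 then True else
     (andreII (lpart w) \<and> andreII (rpart w) \<and> Min (set (lpart w @ rpart w)) \<in> set (rpart w)))"
  by pat_completeness auto
termination
  by (relation "measure length") (auto intro!: lpart_len rpart_len)

declare andreI.simps[simp del] andreII.simps[simp del]

definition perms :: "nat \<Rightarrow> nat list set" where
  "perms n = {w. distinct w \<and> set w = {1..n}}"

definition AndI :: "nat \<Rightarrow> nat list set" where
  "AndI n = {w \<in> perms n. andreI w}"
definition AndII :: "nat \<Rightarrow> nat list set" where
  "AndII n = {w \<in> perms n. andreII w}"

definition no_double_descent :: "nat list \<Rightarrow> bool" where
  "no_double_descent v = (\<not> (\<exists>i. i + 2 < length v \<and> v ! i > v ! (i+1) \<and> v ! (i+1) > v ! (i+2)))"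

definition simsun :: "nat \<Rightarrow> nat list \<Rightarrow> bool" where
  "simsun n w = (w \<noteq> [] \<and> last w = n \<and>
     (\<forall>k\<in>{1..n}. no_double_descent (filter (\<lambda>x. x \<le> k) w)))"

definition RS :: "nat \<Rightarrow> nat list set" where
  "RS n = {w \<in> perms n. simsun n w}"

end

theory Submission
  imports Defs
begin


lemma split_w:
  assumes "w \<noteq> []"
  shows "w = lpart w @ Min (set w) # rpart w"
proof -
  let ?P = "\<lambda>x. x \<noteq> Min (set w)"
  have ne: "dropWhile ?P w \<noteq> []" using dw_ne[OF assms] .
  have "hd (dropWhile ?P w) = Min (set w)" using hd_dropWhile[OF ne] by simp
  then have "dropWhile ?P w = Min (set w) # rpart w" unfolding rpart_def
    using ne by (metis list.collapse)
  then show ?thesis unfolding lpart_def by (metis takeWhile_dropWhile_id)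
qed

lemma parts_gt:
  assumes "distinct w" "w \<noteq> []"
  shows "\<forall>x\<in>set (lpart w). Min (set w) < x" "\<forall>x\<in>set (rpart w). Min (set w) < x"
proof -
  have e: "w = lpart w @ Min (set w) # rpart w" by (rule split_w[OF assms(2)])
  have ge: "\<forall>x\<in>set w. Min (set w) \<le> x" by simp
  have sw0: "\<And>a m b. w = a @ m # b \<Longrightarrow> set w = set a \<union> insert m (set b)" by simp
  have sw: "set w = set (lpart w) \<union> insert (Min (set w)) (set (rpart w))" by (rule sw0[OF e])
  from assms(1) e have d: "distinct (lpart w @ Min (set w) # rpart w)" by simp
  show "\<forall>x\<in>set (lpart w). Min (set w) < x"
  proof
    fix x assume x: "x \<in> set (lpart w)"
    then have "x \<in> set w" using sw by blast
    moreover have "x \<noteq> Min (set w)" using d x by auto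
    ultimately show "Min (set w) < x" using ge by (metis order_le_neq_trans)
  qed
  show "\<forall>x\<in>set (rpart w). Min (set w) < x"
  proof
    fix x assume x: "x \<in> set (rpart w)"
    then have "x \<in> set w" using sw by blast
    moreover have "x \<noteq> Min (set w)" using d x by auto
    ultimately show "Min (set w) < x" using ge by (metis order_le_neq_trans)
  qed
qed

lemma parts_of:
  assumes "\<forall>x\<in>set a. m < x" "\<forall>x\<in>set b. m < x"
  shows "lpart (a @ m # b) = a" "rpart (a @ m # b) = b" "Min (set (a @ m # b)) = m"
proof -
  show M: "Min (set (a @ m # b)) = m"
    by (rule Min_eqI) (use assms in auto)
  have "takeWhile (\<lambda>x. x \<noteq> m) (a @ m # b) = a"
    using assms(1) by (induction a) auto
  then show "lpart (a @ m # b) = a" unfolding lpart_def M .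
  have "dropWhile (\<lambda>x. x \<noteq> m) (a @ m # b) = m # b"
    using assms(1) by (induction a) auto
  then show "rpart (a @ m # b) = b" unfolding rpart_def M by simp
qed

lemma Psi_split:
  assumes "\<forall>x\<in>set a. m < x" "\<forall>x\<in>set b. m < x"
  shows "Psi (a @ m # b) = Node (Psi a) m (Psi b)"
  using parts_of[OF assms] by (subst Psi.simps) simp

lemma Psi_Leaf: "Psi w = Leaf \<longleftrightarrow> w = []"
  by (subst Psi.simps) simp

lemma size_Psi: "size (Psi w) = length w"
proof (induction w rule: Psi.induct)
  case (1 w)
  show ?case
  proof (cases "w = []")
    case True then show ?thesis using Psi_Leaf[of w] by simp
  next
    case False
    have "length w = length (lpart w) + 1 + length (rpart w)"
      using arg_cong[OF split_w[OF False], of length] by simp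
    moreover have "Psi w = Node (Psi (lpart w)) (Min (set w)) (Psi (rpart w))"
      using False by (subst Psi.simps) simp
    moreover have "size (Psi (lpart w)) = length (lpart w)" "size (Psi (rpart w)) = length (rpart w)"
      using 1 False by blast+
    ultimately show ?thesis by simp
  qed
qed

lemma shape_simps[simp]: "shape Leaf = Leaf" "shape (Node l x r) = Node (shape l) () (shape r)"
  "size (shape t) = size t"
  unfolding shape_def by auto

lemma shape_Leaf_iff[simp]: "shape t = Leaf \<longleftrightarrow> t = Leaf"
  by (cases t) auto



fun hasdd :: "'a::linorder list \<Rightarrow> bool" where
  "hasdd (a # b # c # ys) = ((b < a \<and> c < b) \<or> hasdd (b # c # ys))"
| "hasdd _ = False"

fun enddesc :: "'a::linorder list \<Rightarrow> bool" where
  "enddesc [a, b] = (b < a)"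
| "enddesc (a # b # c # ys) = enddesc (b # c # ys)"
| "enddesc _ = False"

lemma hasdd_Cons_min:
  assumes "\<forall>y\<in>set ys. m < y"
  shows "hasdd (m # ys) = hasdd ys"
  using assms by (cases ys rule: hasdd.cases) auto

lemma enddesc_Cons_min:
  assumes "\<forall>y\<in>set ys. m < y"
  shows "enddesc (m # ys) = enddesc ys"
  using assms by (cases ys rule: hasdd.cases) auto

lemma hasdd_split:
  assumes "\<forall>x\<in>set xs. m < x" "\<forall>y\<in>set ys. m < y"
  shows "hasdd (xs @ m # ys) = (hasdd xs \<or> enddesc xs \<or> hasdd ys)"
  using assms
proof (induction xs rule: hasdd.induct)
  case (1 a b c ys')
  then show ?case by simp
next
  case ("2_1")
  then show ?case by (simp add: hasdd_Cons_min)
next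
  case ("2_2" a)
  then show ?case by (cases ys rule: hasdd.cases) auto
next
  case ("2_3" a b)
  then show ?case by (cases ys rule: hasdd.cases) auto
qed

lemma enddesc_split:
  assumes "\<forall>x\<in>set xs. m < x" "\<forall>y\<in>set ys. m < y"
  shows "enddesc (xs @ m # ys) = (if ys = [] then xs \<noteq> [] else enddesc ys)"
  using assms
proof (induction xs rule: hasdd.induct)
  case (1 a b c ys')
  then show ?case by simp
next
  case ("2_1")
  then show ?case by (simp add: enddesc_Cons_min)
next
  case ("2_2" a)
  then show ?case by (cases ys rule: hasdd.cases) auto
next
  case ("2_3" a b)
  then show ?case by (cases ys rule: hasdd.cases) auto
qed

lemma hasdd_iff: "hasdd v \<longleftrightarrow> (\<exists>i. i + 2 < length v \<and> v ! i > v ! (i+1) \<and> v ! (i+1) > v ! (i+2))"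
proof (induction v rule: hasdd.induct)
  case (1 a b c ys)
  show ?case
  proof
    assume "hasdd (a # b # c # ys)"
    then show "\<exists>i. i + 2 < length (a # b # c # ys) \<and> (a # b # c # ys) ! i > (a # b # c # ys) ! (i+1) \<and> (a # b # c # ys) ! (i+1) > (a # b # c # ys) ! (i+2)"
    proof (cases "b < a \<and> c < b")
      case True then show ?thesis by (intro exI[of _ 0]) simp
    next
      case False
      with \<open>hasdd (a # b # c # ys)\<close> 1 obtain i where "i + 2 < length (b # c # ys) \<and> (b # c # ys) ! i > (b # c # ys) ! (i+1) \<and> (b # c # ys) ! (i+1) > (b # c # ys) ! (i+2)"
        by auto
      then show ?thesis by (intro exI[of _ "Suc i"]) simp
    qed
  next
    assume "\<exists>i. i + 2 < length (a # b # c # ys) \<and> (a # b # c # ys) ! i > (a # b # c # ys) ! (i+1) \<and> (a # b # c # ys) ! (i+1) > (a # b # c # ys) ! (i+2)"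
    then obtain i where i: "i + 2 < length (a # b # c # ys) \<and> (a # b # c # ys) ! i > (a # b # c # ys) ! (i+1) \<and> (a # b # c # ys) ! (i+1) > (a # b # c # ys) ! (i+2)" by blast
    show "hasdd (a # b # c # ys)"
    proof (cases i)
      case 0 then show ?thesis using i by simp
    next
      case (Suc j)
      then have "j + 2 < length (b # c # ys) \<and> (b # c # ys) ! j > (b # c # ys) ! (j+1) \<and> (b # c # ys) ! (j+1) > (b # c # ys) ! (j+2)"
        using i by simp
      then show ?thesis using 1 by auto
    qed
  qed
qed auto

lemma no_dd_iff: "no_double_descent v \<longleftrightarrow> \<not> hasdd v"
  unfolding no_double_descent_def hasdd_iff by blast

lemma enddesc_last: "enddesc w \<Longrightarrow> \<exists>a\<in>set w. last w < a"
  by (induction w rule: enddesc.induct) auto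



lemma Psi_nonempty: "w \<noteq> [] \<Longrightarrow> Psi w = Node (Psi (lpart w)) (Min (set w)) (Psi (rpart w))"
  by (subst Psi.simps) simp

lemma Psi_Nil[simp]: "Psi [] = Leaf" using Psi_Leaf by blast
lemma parts_Nil[simp]: "lpart [] = []" "rpart [] = []" unfolding lpart_def rpart_def by simp_all

lemma short_parts: "length w \<le> 1 \<Longrightarrow> lpart w = [] \<and> rpart w = []"
  using lpart_len[of w] rpart_len[of w] by (cases w) auto

lemma andreI_nlo: "andreI w \<Longrightarrow> no_left_only (shape (Psi w))"
proof (induction w rule: Psi.induct)
  case (1 w)
  show ?case
  proof (cases "w = []")
    case True then show ?thesis using Psi_Leaf[of w] by simp
  next
    case False
    show ?thesis
    proof (cases "length w \<le> 1")
      case True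
      then show ?thesis using False short_parts[OF True] Psi_nonempty[OF False] by (simp add: Psi_Leaf)
    next
      case c: False
      have a: "andreI (lpart w)" "andreI (rpart w)" "Max (set (lpart w @ rpart w)) \<in> set (rpart w)"
        using "1.prems" c by (subst (asm) andreI.simps; simp)+
      then have "rpart w \<noteq> []" by auto
      then show ?thesis using 1 a False Psi_nonempty[OF False] by (simp add: Psi_Leaf)
    qed
  qed
qed

lemma andreII_nlo: "andreII w \<Longrightarrow> no_left_only (shape (Psi w))"
proof (induction w rule: Psi.induct)
  case (1 w)
  show ?case
  proof (cases "w = []")
    case True then show ?thesis using Psi_Leaf[of w] by simp
  next
    case False
    show ?thesis
    proof (cases "length w \<le> 1")
      case True
      then show ?thesis using False short_parts[OF True] Psi_nonempty[OF False] by (simp add: Psi_Leaf)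
    next
      case c: False
      have a: "andreII (lpart w)" "andreII (rpart w)" "Min (set (lpart w @ rpart w)) \<in> set (rpart w)"
        using "1.prems" c by (subst (asm) andreII.simps; simp)+
      then have "rpart w \<noteq> []" by auto
      then show ?thesis using 1 a False Psi_nonempty[OF False] by (simp add: Psi_Leaf)
    qed
  qed
qed

lemma dd_nlo: "distinct w \<Longrightarrow> \<not> hasdd w \<Longrightarrow> \<not> enddesc w \<Longrightarrow> no_left_only (shape (Psi w))"
proof (induction w rule: Psi.induct)
  case (1 w)
  show ?case
  proof (cases "w = []")
    case True then show ?thesis using Psi_Leaf[of w] by simp
  next
    case False
    let ?a = "lpart w" and ?b = "rpart w" and ?m = "Min (set w)"
    have e: "w = ?a @ ?m # ?b" by (rule split_w[OF False])
    have ga: "\<forall>x\<in>set ?a. ?m < x" and gb: "\<forall>x\<in>set ?b. ?m < x"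
      using parts_gt[OF "1.prems"(1) False] by auto
    have d: "distinct ?a" "distinct ?b" using "1.prems"(1) e by (metis distinct.simps(2) distinct_append)+
    have h: "\<not> hasdd ?a" "\<not> enddesc ?a" "\<not> hasdd ?b"
      using "1.prems"(2) hasdd_split[OF ga gb] e by auto
    have en: "\<not> enddesc ?b" "?a \<noteq> [] \<longrightarrow> ?b \<noteq> []"
      using "1.prems"(3) enddesc_split[OF ga gb] e by (auto split: if_splits)
    have "no_left_only (shape (Psi ?a))" using 1 False d h by blast
    moreover have "no_left_only (shape (Psi ?b))" using 1 False d h en by blast
    ultimately show ?thesis using Psi_nonempty[OF False] en by (auto simp add: Psi_Leaf)
  qed
qed



lemma size_pos[simp]: "t \<noteq> Leaf \<Longrightarrow> 0 < size t" "t \<noteq> Leaf \<Longrightarrow> Suc 0 \<le> size t" by (cases t; auto)+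

fun preL :: "unit tree \<Rightarrow> nat \<Rightarrow> nat list" where
  "preL Leaf s = []"
| "preL (Node l u r) s = preL l (s+1) @ s # preL r (s + 1 + size l)"

fun rgtL :: "unit tree \<Rightarrow> nat \<Rightarrow> nat list" where
  "rgtL Leaf s = []"
| "rgtL (Node l u r) s = rgtL l (s + 1 + size r) @ s # rgtL r (s+1)"

fun simL :: "unit tree \<Rightarrow> nat \<Rightarrow> nat list" where
  "simL Leaf s = []"
| "simL (Node l u r) s = rgtL l (s+1) @ s # simL r (s + 1 + size l)"

lemma preL_set: "set (preL t s) = {s..<s + size t}"
  by (induction t arbitrary: s) auto
lemma rgtL_set: "set (rgtL t s) = {s..<s + size t}"
  by (induction t arbitrary: s) auto
lemma simL_set: "set (simL t s) = {s..<s + size t}"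
  by (induction t arbitrary: s) (auto simp: rgtL_set)

lemma preL_dist: "distinct (preL t s)"
  by (induction t arbitrary: s) (auto simp: preL_set)
lemma rgtL_dist: "distinct (rgtL t s)"
  by (induction t arbitrary: s) (auto simp: rgtL_set)
lemma simL_dist: "distinct (simL t s)"
  by (induction t arbitrary: s) (auto simp: rgtL_set simL_set rgtL_dist)

lemma preL_shape: "shape (Psi (preL t s)) = t"
proof (induction t arbitrary: s)
  case (Node l u r)
  have "Psi (preL (Node l u r) s) = Node (Psi (preL l (s+1))) s (Psi (preL r (s + 1 + size l)))"
    by simp (rule Psi_split, auto simp: preL_set)
  then show ?case using Node by simp
qed simp

lemma rgtL_shape: "shape (Psi (rgtL t s)) = t"
proof (induction t arbitrary: s)
  case (Node l u r)
  have "Psi (rgtL (Node l u r) s) = Node (Psi (rgtL l (s + 1 + size r))) s (Psi (rgtL r (s+1)))"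
    by simp (rule Psi_split, auto simp: rgtL_set)
  then show ?case using Node by simp
qed simp

lemma simL_shape: "shape (Psi (simL t s)) = t"
proof (induction t arbitrary: s)
  case (Node l u r)
  have "Psi (simL (Node l u r) s) = Node (Psi (rgtL l (s+1))) s (Psi (simL r (s + 1 + size l)))"
    by simp (rule Psi_split, auto simp: rgtL_set simL_set)
  then show ?case using Node rgtL_shape by simp
qed simp

lemma andreI_split:
  assumes "\<forall>x\<in>set a. m < x" "\<forall>x\<in>set b. m < x"
  shows "andreI (a @ m # b) = (length (a @ m # b) \<le> 1 \<or> (andreI a \<and> andreI b \<and> Max (set (a @ b)) \<in> set b))"
  using parts_of[OF assms] by (subst andreI.simps) auto

lemma andreII_split:
  assumes "\<forall>x\<in>set a. m < x" "\<forall>x\<in>set b. m < x"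
  shows "andreII (a @ m # b) = (length (a @ m # b) \<le> 1 \<or> (andreII a \<and> andreII b \<and> Min (set (a @ b)) \<in> set b))"
  using parts_of[OF assms] by (subst andreII.simps) auto

lemma preL_andre: "no_left_only t \<Longrightarrow> andreI (preL t s)"
proof (induction t arbitrary: s)
  case Leaf then show ?case by (simp add: andreI.simps)
next
  case (Node l u r)
  let ?a = "preL l (s+1)" and ?b = "preL r (s + 1 + size l)"
  have ga: "\<forall>x\<in>set ?a. s < x" and gb: "\<forall>x\<in>set ?b. s < x" by (auto simp: preL_set)
  show ?case
  proof (cases "r = Leaf")
    case True
    then have "l = Leaf" using Node.prems by auto
    then show ?thesis using True by (simp add: andreI.simps)
  next
    case False
    have "Max (set (?a @ ?b)) = s + size l + size r"
      using False by (intro Max_eqI) (auto simp: preL_set)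
    moreover have "s + size l + size r \<in> set ?b" using False by (auto simp: preL_set)
    ultimately show ?thesis using Node andreI_split[OF ga gb] by simp
  qed
qed

lemma rgtL_andre: "no_left_only t \<Longrightarrow> andreII (rgtL t s)"
proof (induction t arbitrary: s)
  case Leaf then show ?case by (simp add: andreII.simps)
next
  case (Node l u r)
  let ?a = "rgtL l (s + 1 + size r)" and ?b = "rgtL r (s+1)"
  have ga: "\<forall>x\<in>set ?a. s < x" and gb: "\<forall>x\<in>set ?b. s < x" by (auto simp: rgtL_set)
  show ?case
  proof (cases "r = Leaf")
    case True
    then have "l = Leaf" using Node.prems by auto
    then show ?thesis using True by (simp add: andreII.simps)
  next
    case False
    have "Min (set (?a @ ?b)) = s + 1"
      using False by (intro Min_eqI) (auto simp: rgtL_set)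
    moreover have "s + 1 \<in> set ?b" using False by (auto simp: rgtL_set)
    ultimately show ?thesis using Node andreII_split[OF ga gb] by simp
  qed
qed



lemma filt_split: "filter P (a @ m # b) = filter P a @ (if P m then m # filter P b else filter P b)"
  by simp

lemma rgtL_filt: "no_left_only t \<Longrightarrow>
  \<not> hasdd (filter (\<lambda>x. x \<le> k) (rgtL t s)) \<and> \<not> enddesc (filter (\<lambda>x. x \<le> k) (rgtL t s))"
proof (induction t arbitrary: s)
  case Leaf then show ?case by simp
next
  case (Node l u r)
  let ?a = "rgtL l (s + 1 + size r)" and ?b = "rgtL r (s+1)"
  let ?fa = "filter (\<lambda>x. x \<le> k) ?a" and ?fb = "filter (\<lambda>x. x \<le> k) ?b"
  show ?case
  proof (cases "s \<le> k")
    case False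
    then have "filter (\<lambda>x. x \<le> k) (rgtL (Node l u r) s) = []"
      using rgtL_set[of "Node l u r" s] by (auto simp: filter_empty_conv)
    then show ?thesis by simp
  next
    case True
    have eq: "filter (\<lambda>x. x \<le> k) (rgtL (Node l u r) s) = ?fa @ s # ?fb" using True by simp
    have ga: "\<forall>x\<in>set ?fa. s < x" and gb: "\<forall>x\<in>set ?fb. s < x" by (auto simp: rgtL_set)
    have ih: "\<not> hasdd ?fa" "\<not> enddesc ?fa" "\<not> hasdd ?fb" "\<not> enddesc ?fb" using Node by auto
    have "?fb \<noteq> []" if fne: "?fa \<noteq> []"
    proof -
      obtain x where "x \<in> set ?fa" using hd_in_set[OF fne] by blast
      then have "s + 1 + size r \<le> k" by (auto simp: rgtL_set)
      then have "?fb = ?b" by (auto simp: rgtL_set)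
      moreover have "r \<noteq> Leaf" using Node.prems fne by auto
      ultimately show ?thesis using rgtL_set[of r "s+1"] by auto
    qed
    then show ?thesis unfolding eq using hasdd_split[OF ga gb] enddesc_split[OF ga gb] ih by auto
  qed
qed

lemma simL_filt: "no_left_only t \<Longrightarrow> \<not> hasdd (filter (\<lambda>x. x \<le> k) (simL t s))"
proof (induction t arbitrary: s)
  case Leaf then show ?case by simp
next
  case (Node l u r)
  let ?a = "rgtL l (s + 1)" and ?b = "simL r (s + 1 + size l)"
  let ?fa = "filter (\<lambda>x. x \<le> k) ?a" and ?fb = "filter (\<lambda>x. x \<le> k) ?b"
  show ?case
  proof (cases "s \<le> k")
    case False
    then have "filter (\<lambda>x. x \<le> k) (simL (Node l u r) s) = []"
      using simL_set[of "Node l u r" s] by (auto simp: filter_empty_conv)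
    then show ?thesis by simp
  next
    case True
    have eq: "filter (\<lambda>x. x \<le> k) (simL (Node l u r) s) = ?fa @ s # ?fb" using True by simp
    have ga: "\<forall>x\<in>set ?fa. s < x" and gb: "\<forall>x\<in>set ?fb. s < x" by (auto simp: rgtL_set simL_set)
    have ih: "\<not> hasdd ?fa" "\<not> enddesc ?fa" "\<not> hasdd ?fb" using Node rgtL_filt[of l k "s+1"] by auto
    then show ?thesis unfolding eq using hasdd_split[OF ga gb] by auto
  qed
qed

lemma simL_last: "t \<noteq> Leaf \<Longrightarrow> no_left_only t \<Longrightarrow> last (simL t s) = s + size t - 1"
proof (induction t arbitrary: s)
  case Leaf then show ?case by simp
next
  case (Node l u r)
  show ?case
  proof (cases "r = Leaf")
    case True
    then have "l = Leaf" using Node.prems by auto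
    then show ?thesis using True by simp
  next
    case False
    have "simL r (s + 1 + size l) \<noteq> []" using False simL_set[of r "s + 1 + size l"] by auto
    then show ?thesis using Node False by simp
  qed
qed

lemma perm_len: "w \<in> perms n \<Longrightarrow> length w = n"
  unfolding perms_def using distinct_card by fastforce

theorem proposition2p4:
  fixes n :: nat
  assumes "n \<ge> 1"
  shows "URL n = (\<lambda>\<sigma>. shape (Psi \<sigma>)) ` AndI n
       \<and> URL n = (\<lambda>\<sigma>. shape (Psi \<sigma>)) ` AndII n
       \<and> URL n = (\<lambda>\<sigma>. shape (Psi \<sigma>)) ` RS n"
proof (intro conjI)
  have sz: "size (shape (Psi w)) = n" if "w \<in> perms n" for w
    using perm_len[OF that] by (simp add: size_Psi)
  have pm: "X t 1 \<in> perms (size t)" if "set (X t 1) = {1..<1 + size t}" "distinct (X t 1)"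
    for X :: "unit tree \<Rightarrow> nat \<Rightarrow> nat list" and t
    using that unfolding perms_def by auto
  show "URL n = (\<lambda>\<sigma>. shape (Psi \<sigma>)) ` AndI n"
  proof
    show "URL n \<subseteq> (\<lambda>\<sigma>. shape (Psi \<sigma>)) ` AndI n"
    proof
      fix t assume "t \<in> URL n"
      then have t: "size t = n" "no_left_only t" unfolding URL_def by auto
      have "preL t 1 \<in> AndI n" unfolding AndI_def
        using pm[of preL t] preL_set preL_dist preL_andre[OF t(2)] t(1) by auto
      then show "t \<in> (\<lambda>\<sigma>. shape (Psi \<sigma>)) ` AndI n" using preL_shape[of t 1] by force
    qed
    show "(\<lambda>\<sigma>. shape (Psi \<sigma>)) ` AndI n \<subseteq> URL n"
      unfolding AndI_def URL_def using sz andreI_nlo by auto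
  qed
  show "URL n = (\<lambda>\<sigma>. shape (Psi \<sigma>)) ` AndII n"
  proof
    show "URL n \<subseteq> (\<lambda>\<sigma>. shape (Psi \<sigma>)) ` AndII n"
    proof
      fix t assume "t \<in> URL n"
      then have t: "size t = n" "no_left_only t" unfolding URL_def by auto
      have "rgtL t 1 \<in> AndII n" unfolding AndII_def
        using pm[of rgtL t] rgtL_set rgtL_dist rgtL_andre[OF t(2)] t(1) by auto
      then show "t \<in> (\<lambda>\<sigma>. shape (Psi \<sigma>)) ` AndII n" using rgtL_shape[of t 1] by force
    qed
    show "(\<lambda>\<sigma>. shape (Psi \<sigma>)) ` AndII n \<subseteq> URL n"
      unfolding AndII_def URL_def using sz andreII_nlo by auto
  qed
  show "URL n = (\<lambda>\<sigma>. shape (Psi \<sigma>)) ` RS n"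
  proof
    show "URL n \<subseteq> (\<lambda>\<sigma>. shape (Psi \<sigma>)) ` RS n"
    proof
      fix t assume "t \<in> URL n"
      then have t: "size t = n" "no_left_only t" unfolding URL_def by auto
      have tl: "t \<noteq> Leaf" using t(1) assms by auto
      have ne: "simL t 1 \<noteq> []" using tl simL_set[of t 1] by auto
      have "simsun n (simL t 1)" unfolding simsun_def no_dd_iff
        using ne simL_last[OF tl t(2), of 1] t(1) simL_filt[OF t(2)] by auto
      then have "simL t 1 \<in> RS n" unfolding RS_def
        using pm[of simL t] simL_set simL_dist t(1) by auto
      then show "t \<in> (\<lambda>\<sigma>. shape (Psi \<sigma>)) ` RS n" using simL_shape[of t 1] by force
    qed
    show "(\<lambda>\<sigma>. shape (Psi \<sigma>)) ` RS n \<subseteq> URL n"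
    proof
      fix t assume "t \<in> (\<lambda>\<sigma>. shape (Psi \<sigma>)) ` RS n"
      then obtain w where w: "w \<in> perms n" "simsun n w" and t: "t = shape (Psi w)"
        unfolding RS_def by auto
      have sw: "set w = {1..n}" "distinct w" using w(1) unfolding perms_def by auto
      have "filter (\<lambda>x. x \<le> n) w = w" using sw(1) by (auto simp: filter_id_conv)
      then have h: "\<not> hasdd w" using w(2) assms unfolding simsun_def no_dd_iff
        by (metis atLeastAtMost_iff order_refl)
      have "\<not> enddesc w"
      proof
        assume "enddesc w"
        then obtain a where "a \<in> set w" "last w < a" using enddesc_last by blast
        then show False using w(2) sw(1) unfolding simsun_def by auto
      qed
      then have "no_left_only t" using dd_nlo[OF sw(2) h] t by simp
      then show "t \<in> URL n" unfolding URL_def using sz[OF w(1)] t by simp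
    qed
  qed
qed


end
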